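(* Let $\mathcal{K}^{\langle\infty\rangle}$ be a planar unbounded simple nested fractal whose number of essential fixed points is $k=4$. Then $\mathcal{K}^{\langle\infty\rangle}$ has the good labelling property.
   Context: Setting: $L>1$, $N\ge2$, $\nu_1=0,\dots,\nu_N\in\mathbb{R}^2$, $\Psi_i(x)=x/L+\nu_i$, and $\mathcal{K}^{\langle 0\rangle}=\bigcup_i\Psi_i(\mathcal{K}^{\langle 0\rangle})$ is a planar simple nested fractal (essential fixed points $V_0^{\langle0\rangle}$: fixed points $x$ for which there are another fixed point $y$ and $\Psi_i\ne\Psi_j$ with $\Psi_i(x)=\Psi_j(y)$; open set condition, nesting, symmetry with respect to perpendicular bisectors of pairs of essential fixed points, connectivity); $k=\#V_0^{\langle0\rangle}$, and $V_0^{\langle0\rangle}$ spans a regular $k$-gon. $\mathcal{K}^{\langle M\rangle}=L^M\mathcal{K}^{\langle 0\rangle}$, $\mathcal{K}^{\langle\infty\rangle}=\bigcup_{M\ge0}\mathcal{K}^{\langle M\rangle}$. An $M$-complex is $\Delta_M=\mathcal{K}^{\langle M\rangle}+\nu_{\Delta_M}$ with $\nu_{\Delta_M}=\sum_{j=M+1}^{J}L^j\nu_{i_j}$ ($J\ge M+1$), vertex set $V(\Delta_M)=L^MV_0^{\langle0\rangle}+\nu_{\Delta_M}$; $V_M^{\langle M\rangle}=L^MV_0^{\langle0\rangle}$ and $V_M^{\langle\infty\rangle}$ is the union of all $V(\Delta_M)$. With $\mathcal{A}$ an alphabet of $k$ symbols and $\mathcal{R}_M$ the $k$ rotations about the barycenter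 of $\mathcal{K}^{\langle M\rangle}$ preserving $V_M^{\langle M\rangle}$, a good labelling function of order $M$ is $\ell_M:V_M^{\langle\infty\rangle}\to\mathcal{A}$, bijective on $V_M^{\langle M\rangle}$, such that for each $M$-complex $\Delta_M=\mathcal{K}^{\langle M\rangle}+\nu_{\Delta_M}$ there is $R_{\Delta_M}\in\mathcal{R}_M$ with $\ell_M(v)=\ell_M(R_{\Delta_M}(v-\nu_{\Delta_M}))$, $v\in V(\Delta_M)$. The good labelling property means that a good labelling function of some order $M\in\mathbb{Z}$ exists. *)

theory Defs
  imports "HOL-Analysis.Analysis"
begin

text \<open>The plane is modelled by the type complex. Indices of the similitudes range over 1..N.\<close>

definition psi :: "real \<Rightarrow> (nat \<Rightarrow> complex) \<Rightarrow> nat \<Rightarrow> complex \<Rightarrow> complex" where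
  "psi L \<nu> i x = x / of_real L + \<nu> i"

fun psiw :: "real \<Rightarrow> (nat \<Rightarrow> complex) \<Rightarrow> nat list \<Rightarrow> complex \<Rightarrow> complex" where
  "psiw L \<nu> [] = id"
| "psiw L \<nu> (i # w) = psi L \<nu> i \<circ> psiw L \<nu> w"

definition fixpts :: "real \<Rightarrow> nat \<Rightarrow> (nat \<Rightarrow> complex) \<Rightarrow> complex set" where
  "fixpts L N \<nu> = {x. \<exists>i\<in>{1..N}. psi L \<nu> i x = x}"

definition ess_fixpts :: "real \<Rightarrow> nat \<Rightarrow> (nat \<Rightarrow> complex) \<Rightarrow> complex set" where
  "ess_fixpts L N \<nu> = {x \<in> fixpts L N \<nu>. \<exists>y\<in>fixpts L N \<nu>. \<exists>i\<in>{1..N}. \<exists>j\<in>{1..N}.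
      psi L \<nu> i \<noteq> psi L \<nu> j \<and> psi L \<nu> i x = psi L \<nu> j y}"

definition Vn :: "real \<Rightarrow> nat \<Rightarrow> (nat \<Rightarrow> complex) \<Rightarrow> nat \<Rightarrow> complex set" where
  "Vn L N \<nu> n = \<Union> {psiw L \<nu> w ` ess_fixpts L N \<nu> | w. length w = n \<and> set w \<subseteq> {1..N}}"

definition bisector_refl :: "complex \<Rightarrow> complex \<Rightarrow> complex \<Rightarrow> complex" where
  "bisector_refl x y z =
     z - (2 * ((z - (x + y) / 2) \<bullet> (y - x)) / ((y - x) \<bullet> (y - x))) *\<^sub>R (y - x)"

definition simple_nested_fractal ::
  "real \<Rightarrow> nat \<Rightarrow> (nat \<Rightarrow> complex) \<Rightarrow> complex set \<Rightarrow> bool" where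
  "simple_nested_fractal L N \<nu> K \<longleftrightarrow>
     L > 1 \<and> N \<ge> 2 \<and> \<nu> 1 = 0 \<and>
     \<comment> \<open>K is the self-similar set (attractor) of the IFS\<close>
     compact K \<and> K \<noteq> {} \<and> K = (\<Union>i\<in>{1..N}. psi L \<nu> i ` K) \<and>
     \<comment> \<open>at least two essential fixed points\<close>
     card (ess_fixpts L N \<nu>) \<ge> 2 \<and>
     \<comment> \<open>open set condition\<close>
     (\<exists>U. open U \<and> bounded U \<and> U \<noteq> {} \<and> (\<forall>i\<in>{1..N}. psi L \<nu> i ` U \<subseteq> U) \<and>
        (\<forall>i\<in>{1..N}. \<forall>j\<in>{1..N}. i \<noteq> j \<longrightarrow> psi L \<nu> i ` U \<inter> psi L \<nu> j ` U = {})) \<and>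
     \<comment> \<open>nesting\<close>
     (\<forall>w w'. length w = length w' \<and> set w \<subseteq> {1..N} \<and> set w' \<subseteq> {1..N} \<and> w \<noteq> w' \<longrightarrow>
        psiw L \<nu> w ` K \<inter> psiw L \<nu> w' ` K =
        psiw L \<nu> w ` ess_fixpts L N \<nu> \<inter> psiw L \<nu> w' ` ess_fixpts L N \<nu>) \<and>
     \<comment> \<open>symmetry\<close>
     (\<forall>x\<in>ess_fixpts L N \<nu>. \<forall>y\<in>ess_fixpts L N \<nu>. x \<noteq> y \<longrightarrow>
        (\<forall>n. bisector_refl x y ` Vn L N \<nu> n = Vn L N \<nu> n)) \<and>
     \<comment> \<open>connectivity: the graph of 1-cells (adjacent iff intersecting) is connected\<close>
     (\<forall>i\<in>{1..N}. \<forall>j\<in>{1..N}. (i, j) \<in>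
        {(a, b). a \<in> {1..N} \<and> b \<in> {1..N} \<and> psi L \<nu> a ` K \<inter> psi L \<nu> b ` K \<noteq> {}}\<^sup>*)"

definition regular_polygon :: "complex set \<Rightarrow> nat \<Rightarrow> bool" where
  "regular_polygon V k \<longleftrightarrow>
     (\<exists>c r \<theta>. r > 0 \<and> V = (\<lambda>j. c + of_real r * cis (\<theta> + 2 * pi * real j / real k)) ` {..<k})"

definition complex_shifts :: "real \<Rightarrow> nat \<Rightarrow> (nat \<Rightarrow> complex) \<Rightarrow> int \<Rightarrow> complex set" where
  "complex_shifts L N \<nu> M =
     {(\<Sum>j\<in>{M+1..J}. of_real (L powi j) * \<nu> (idx j)) | idx J.
        J \<ge> M + 1 \<and> (\<forall>j\<in>{M+1..J}. idx j \<in> {1..N})}"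

definition VMM :: "real \<Rightarrow> nat \<Rightarrow> (nat \<Rightarrow> complex) \<Rightarrow> int \<Rightarrow> complex set" where
  "VMM L N \<nu> M = (\<lambda>v. of_real (L powi M) * v) ` ess_fixpts L N \<nu>"

definition VMinf :: "real \<Rightarrow> nat \<Rightarrow> (nat \<Rightarrow> complex) \<Rightarrow> int \<Rightarrow> complex set" where
  "VMinf L N \<nu> M = (\<Union>s\<in>complex_shifts L N \<nu> M. (\<lambda>v. v + s) ` VMM L N \<nu> M)"

text \<open>Barycenter of K^<M> (= barycenter of the regular polygon spanned by V_M^<M>).\<close>
definition bary :: "real \<Rightarrow> nat \<Rightarrow> (nat \<Rightarrow> complex) \<Rightarrow> int \<Rightarrow> complex" where
  "bary L N \<nu> M = (\<Sum>v\<in>VMM L N \<nu> M. v) / of_nat (card (VMM L N \<nu> M))"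

definition rotations :: "real \<Rightarrow> nat \<Rightarrow> (nat \<Rightarrow> complex) \<Rightarrow> int \<Rightarrow> (complex \<Rightarrow> complex) set" where
  "rotations L N \<nu> M = {\<rho>. \<exists>\<omega>. norm \<omega> = 1 \<and>
      \<rho> = (\<lambda>x. bary L N \<nu> M + \<omega> * (x - bary L N \<nu> M)) \<and> \<rho> ` VMM L N \<nu> M = VMM L N \<nu> M}"

definition good_labelling ::
  "real \<Rightarrow> nat \<Rightarrow> (nat \<Rightarrow> complex) \<Rightarrow> 'a set \<Rightarrow> int \<Rightarrow> (complex \<Rightarrow> 'a) \<Rightarrow> bool" where
  "good_labelling L N \<nu> A M lab \<longleftrightarrow>
     lab ` VMinf L N \<nu> M \<subseteq> A \<and> bij_betw lab (VMM L N \<nu> M) A \<and>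
     (\<forall>s\<in>complex_shifts L N \<nu> M. \<exists>R\<in>rotations L N \<nu> M.
        \<forall>v\<in>(\<lambda>u. u + s) ` VMM L N \<nu> M. lab v = lab (R (v - s)))"

text \<open>Good labelling property; the alphabet is any set of k = #V_0 symbols (here natural numbers).\<close>
definition good_labelling_property :: "real \<Rightarrow> nat \<Rightarrow> (nat \<Rightarrow> complex) \<Rightarrow> bool" where
  "good_labelling_property L N \<nu> \<longleftrightarrow>
     (\<exists>(A::nat set) (M::int) lab. finite A \<and> card A = card (ess_fixpts L N \<nu>) \<and>
        good_labelling L N \<nu> A M lab)"

end

theory Submission
  imports Defs
begin

lemma poly4:
  assumes "regular_polygon V 4"
  shows "\<exists>c \<rho>. \<rho> \<noteq> 0 \<and> V = {c + \<rho>, c + \<rho> * \<i>, c - \<rho>, c - \<rho> * \<i>}"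
proof -
  obtain c r \<theta> where r: "r > 0" and V: "V = (\<lambda>j. c + of_real r * cis (\<theta> + 2 * pi * real j / real 4)) ` {..<4}"
    using assms unfolding regular_polygon_def by blast
  have e: "{..<4::nat} = {0,1,2,3}" by auto
  have c1: "cis (\<theta> + 2 * pi * real (1::nat) / real 4) = cis \<theta> * \<i>"
  proof -
    have "\<theta> + 2 * pi * real (1::nat) / real 4 = \<theta> + pi/2" by simp
    thus ?thesis by (simp add: cis_mult[symmetric])
  qed
  have c2: "cis (\<theta> + 2 * pi * real (2::nat) / real 4) = - cis \<theta>"
  proof -
    have "\<theta> + 2 * pi * real (2::nat) / real 4 = \<theta> + pi" by simp
    thus ?thesis by (simp add: cis_mult[symmetric])
  qed
  have c3: "cis (\<theta> + 2 * pi * real (3::nat) / real 4) = - cis \<theta> * \<i>"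
  proof -
    have "\<theta> + 2 * pi * real (3::nat) / real 4 = (\<theta> + pi) + pi/2" by simp
    hence "cis (\<theta> + 2 * pi * real (3::nat) / real 4) = cis \<theta> * cis pi * cis (pi/2)"
      by (metis cis_mult)
    thus ?thesis by simp
  qed
  define \<rho> where "\<rho> = of_real r * cis \<theta>"
  have "\<rho> \<noteq> 0" using r by (simp add: \<rho>_def)
  moreover have "V = {c + \<rho>, c + \<rho> * \<i>, c - \<rho>, c - \<rho> * \<i>}"
    unfolding V e using c1 c2 c3 by (simp add: \<rho>_def algebra_simps)
  ultimately show ?thesis by blast
qed

lemma fix_in_K:
  assumes K: "closed K" "K \<noteq> {}" and sub: "psi L \<nu> m ` K \<subseteq> K"
    and fx: "psi L \<nu> m x = x" and L: "L > 1"
  shows "x \<in> K"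
proof -
  obtain y where y: "y \<in> K" using K by blast
  define f where "f n = (psi L \<nu> m ^^ n) y" for n
  have fK: "f n \<in> K" for n
    by (induction n) (use y sub in \<open>auto simp: f_def\<close>)
  have nu: "\<nu> m = x - x / of_real L" using fx by (simp add: psi_def algebra_simps)
  have Lnz: "(of_real L :: complex) \<noteq> 0" using L by simp
  have ff: "f n = x + (y - x) * of_real ((1/L)^n)" for n
  proof (induction n)
    case 0 then show ?case by (simp add: f_def)
  next
    case (Suc n)
    have "f (Suc n) = psi L \<nu> m (f n)" by (simp add: f_def)
    also have "\<dots> = (x + (y - x) * of_real ((1/L)^n)) / of_real L + (x - x / of_real L)"
      using Suc by (simp add: psi_def nu)
    also have "\<dots> = x + (y - x) * of_real ((1/L)^Suc n)"
      using Lnz by (simp add: field_simps)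
    finally show ?case .
  qed
  have "(\<lambda>n. (1/L)^n) \<longlonglongrightarrow> 0" using L by (intro LIMSEQ_realpow_zero) auto
  hence "(\<lambda>n. x + (y - x) * of_real ((1/L)^n)) \<longlonglongrightarrow> x + (y - x) * of_real 0"
    by (intro tendsto_add tendsto_const tendsto_mult tendsto_of_real)
  hence "f \<longlonglongrightarrow> x" unfolding ff[abs_def] by simp
  thus ?thesis using closed_sequentially[OF K(1), of f] fK by blast
qed

lemma W_cases: "w \<in> {1, \<i>, -1, -\<i>} \<Longrightarrow> w = 1 \<or> w = \<i> \<or> w = -1 \<or> w = -\<i>" by auto

lemma norm_small:
  assumes L: "L > 1" and s: "\<sigma> \<in> {\<i>, -\<i>}"
  shows "cmod (\<sigma> * of_real (1 - 1/L) - of_real (1/L)) < 1"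
proof -
  have t: "0 < 1/L" "1/L < 1" using L by auto
  define t where "t = 1/L"
  have h: "t^2 + (1-t)^2 < 1" using t unfolding t_def[symmetric]
    by (simp add: power2_eq_square algebra_simps)
  have "\<sigma> * of_real (1 - t) - of_real t = Complex (-t) (1-t) \<or> \<sigma> * of_real (1 - t) - of_real t = Complex (-t) (-(1-t))"
    using s by (auto simp: complex_eq_iff)
  moreover have "cmod (Complex (-t) (1-t)) < 1" "cmod (Complex (-t) (-(1-t))) < 1"
    using h by (simp_all add: cmod_def real_sqrt_lt_1_iff power2_eq_square mult.commute[of "t - 1"] right_diff_distrib left_diff_distrib)
  ultimately show ?thesis unfolding t_def by auto
qed

lemma no_adj:
  fixes W :: "complex set"
  assumes L: "L > 1"
    and Wd: "W = {1, \<i>, -1, -\<i>}"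
    and V0: "ess_fixpts L N \<nu> = (\<lambda>w. c + \<rho> * w) ` W" and rho: "\<rho> \<noteq> 0"
    and VK: "ess_fixpts L N \<nu> \<subseteq> K"
    and Kinv: "\<forall>i\<in>{1..N}. psi L \<nu> i ` K \<subseteq> K"
    and nest: "psi L \<nu> a ` K \<inter> psi L \<nu> b ` K = psi L \<nu> a ` ess_fixpts L N \<nu> \<inter> psi L \<nu> b ` ess_fixpts L N \<nu>"
    and wq: "wq \<in> W" and s: "\<sigma> \<in> {\<i>, -\<i>}"
    and eq: "psi L \<nu> a (c + \<rho> * (\<sigma> * wq)) = psi L \<nu> b (c + \<rho> * wq)"
  shows False
proof -
  define V where "V = ess_fixpts L N \<nu>"
  define p where "p = c + \<rho> * (\<sigma> * wq)"
  define q where "q = c + \<rho> * wq"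
  define p' where "p' = c + \<rho> * (- wq)"
  define q' where "q' = c + \<rho> * (- (\<sigma> * wq))"
  have Lnz: "(of_real L :: complex) \<noteq> 0" using L by simp
  have inW: "\<sigma> * wq \<in> W" "- wq \<in> W" "- (\<sigma> * wq) \<in> W" using wq s Wd by auto
  have pV: "p \<in> V" "q \<in> V" "p' \<in> V" "q' \<in> V"
    unfolding V_def V0
    subgoal unfolding p_def by (rule imageI) (rule inW(1))
    subgoal unfolding q_def by (rule imageI) (rule wq)
    subgoal unfolding p'_def by (rule imageI) (rule inW(2))
    subgoal unfolding q'_def by (rule imageI) (rule inW(3))
    done
  obtain mp where mp: "mp \<in> {1..N}" "psi L \<nu> mp p = p"
    using pV(1) unfolding V_def ess_fixpts_def fixpts_def by blast
  obtain mq where mq: "mq \<in> {1..N}" "psi L \<nu> mq q = q"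
    using pV(2) unfolding V_def ess_fixpts_def fixpts_def by blast
  have nup: "\<nu> mp = p - p / of_real L" using mp by (simp add: psi_def algebra_simps)
  have nuq: "\<nu> mq = q - q / of_real L" using mq by (simp add: psi_def algebra_simps)
  have nub: "\<nu> b = \<nu> a + (p - q) / of_real L"
  proof -
    have "\<nu> a + p / of_real L = \<nu> b + q / of_real L"
      using eq unfolding p_def[symmetric] q_def[symmetric] by (simp add: psi_def add.commute)
    hence "\<nu> b = \<nu> a + p / of_real L - q / of_real L" by (simp add: algebra_simps)
    thus ?thesis by (simp add: diff_divide_distrib)
  qed
  define y1 where "y1 = psi L \<nu> mp p'"
  define y2 where "y2 = psi L \<nu> mq q'"
  have y1K: "y1 \<in> K" using Kinv mp pV VK unfolding y1_def V_def by blast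
  have y2K: "y2 \<in> K" using Kinv mq pV VK unfolding y2_def V_def by blast
  have y1e: "y1 = p' / of_real L + p - p / of_real L" by (simp add: y1_def psi_def nup)
  have y2e: "y2 = q' / of_real L + q - q / of_real L" by (simp add: y2_def psi_def nuq)
  have "psi L \<nu> a y1 = psi L \<nu> b y2"
    unfolding psi_def nub y1e y2e p_def q_def p'_def q'_def using Lnz
    by (simp add: field_simps)
  hence "psi L \<nu> a y1 \<in> psi L \<nu> a ` K \<inter> psi L \<nu> b ` K" using y1K y2K by (metis IntI imageI)
  hence "psi L \<nu> a y1 \<in> psi L \<nu> a ` V" using nest unfolding V_def by blast
  then obtain v where v: "v \<in> V" "psi L \<nu> a y1 = psi L \<nu> a v" by blast
  have "y1 = v" using v(2) Lnz by (simp add: psi_def)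
  then obtain w where w: "w \<in> W" "y1 = c + \<rho> * w" using v(1) unfolding V_def V0 by blast
  have "y1 - c = \<rho> * wq * (\<sigma> * of_real (1 - 1/L) - of_real (1/L))"
    unfolding y1e p_def p'_def using Lnz by (simp add: field_simps)
  hence "\<rho> * w = \<rho> * wq * (\<sigma> * of_real (1 - 1/L) - of_real (1/L))" using w by simp
  hence "w = wq * (\<sigma> * of_real (1 - 1/L) - of_real (1/L))" using rho by simp
  hence "cmod w = cmod wq * cmod (\<sigma> * of_real (1 - 1/L) - of_real (1/L))" by (simp add: norm_mult)
  moreover have "cmod w = 1" "cmod wq = 1" using w(1) wq Wd by auto
  ultimately show False using norm_small[OF L s] by simp
qed

definition ev2 :: "complex \<Rightarrow> bool" where
  "ev2 z \<longleftrightarrow> (\<exists>a::int. Re z = 2 * of_int a) \<and> (\<exists>b::int. Im z = 2 * of_int b)"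

lemma ev2_0: "ev2 0" unfolding ev2_def by (auto intro: exI[of _ 0])

lemma ev2_add: "ev2 x \<Longrightarrow> ev2 y \<Longrightarrow> ev2 (x + y)"
  unfolding ev2_def by (auto intro!: exI[of _ "_ + _"])

lemma ev2_diff: "ev2 x \<Longrightarrow> ev2 y \<Longrightarrow> ev2 (x - y)"
  unfolding ev2_def by (auto intro!: exI[of _ "_ - _"])

lemma ev2_intmult: "ev2 x \<Longrightarrow> ev2 (of_int k * x)"
  unfolding ev2_def by (auto intro!: exI[of _ "k * _"])

lemma ev2_sum: "(\<And>x. x \<in> S \<Longrightarrow> ev2 (f x)) \<Longrightarrow> ev2 (sum f S)"
proof (induction S rule: infinite_finite_induct)
  case (infinite A) then show ?case by (simp add: ev2_0)
next
  case empty then show ?case by (simp add: ev2_0)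
next
  case (insert x F) then show ?case by (simp add: ev2_add)
qed

definition labz :: "int \<Rightarrow> int \<Rightarrow> nat" where
  "labz a b = (if even a then 1 else 0) + (if (a + b) mod 4 = 3 then 2 else 0)"

definition labc :: "complex \<Rightarrow> nat" where
  "labc z = labz \<lfloor>Re z\<rfloor> \<lfloor>Im z\<rfloor>"

lemma floor_m1: "\<lfloor>(-1::real)\<rfloor> = -1" by linarith

lemma labc_vals: "labc 1 = 0" "labc \<i> = 1" "labc (-1) = 2" "labc (-\<i>) = 3"
  by (simp_all add: labc_def labz_def floor_m1)

lemma labc_shift:
  assumes "ev2 g"
  shows "(\<forall>w\<in>{1, \<i>, -1, -\<i>}. labc (w + g) = labc w) \<or> (\<forall>w\<in>{1, \<i>, -1, -\<i>}. labc (w + g) = labc (-w))"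
proof -
  obtain A B :: int where AB: "Re g = 2 * of_int A" "Im g = 2 * of_int B"
    using assms unfolding ev2_def by blast
  have r1: "\<lfloor>Re (w + g)\<rfloor> = \<lfloor>Re w\<rfloor> + 2 * A" and r2: "\<lfloor>Im (w + g)\<rfloor> = \<lfloor>Im w\<rfloor> + 2 * B" for w
  proof -
    have "Re (w + g) = Re w + of_int (2 * A)" using AB by simp
    thus "\<lfloor>Re (w + g)\<rfloor> = \<lfloor>Re w\<rfloor> + 2 * A" by linarith
    have "Im (w + g) = Im w + of_int (2 * B)" using AB by simp
    thus "\<lfloor>Im (w + g)\<rfloor> = \<lfloor>Im w\<rfloor> + 2 * B" by linarith
  qed
  show ?thesis
  proof (cases "even (A + B)")
    case True
    hence "labc (w + g) = labc w" if "w \<in> {1, \<i>, -1, -\<i>}" for w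
      using that unfolding labc_def r1 r2 labz_def by (auto simp: floor_m1; presburger)
    thus ?thesis by blast
  next
    case False
    have "labc (w + g) = labc (-w)" if "w \<in> {1, \<i>, -1, -\<i>}" for w
    proof -
      from that have "w = 1 \<or> w = \<i> \<or> w = -1 \<or> w = -\<i>" by blast
      thus ?thesis unfolding labc_def r1 r2 labz_def using False
        by (elim disjE) (simp_all add: floor_m1; presburger)+
    qed
    thus ?thesis by blast
  qed
qed

theorem corollary3p16:
  fixes L :: real and N :: nat and \<nu> :: "nat \<Rightarrow> complex" and K :: "complex set"
  assumes "simple_nested_fractal L N \<nu> K"
    and "regular_polygon (ess_fixpts L N \<nu>) (card (ess_fixpts L N \<nu>))"
    and "card (ess_fixpts L N \<nu>) = 4"
  shows "good_labelling_property L N \<nu>"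
proof -
  define V where "V = ess_fixpts L N \<nu>"
  define W :: "complex set" where "W = {1, \<i>, -1, -\<i>}"
  note sn = assms(1)[unfolded simple_nested_fractal_def]
  have L: "L > 1" using sn by (elim conjE) assumption
  have N: "N \<ge> 2" using sn by (elim conjE) assumption
  have nu1: "\<nu> 1 = 0" using sn by (elim conjE) assumption
  have Kc: "compact K" using sn by (elim conjE) assumption
  have Kne: "K \<noteq> {}" using sn by (elim conjE) assumption
  have Keq: "K = (\<Union>i\<in>{1..N}. psi L \<nu> i ` K)" using sn by (elim conjE) assumption
  have nest: "\<forall>w w'. length w = length w' \<and> set w \<subseteq> {1..N} \<and> set w' \<subseteq> {1..N} \<and> w \<noteq> w' \<longrightarrow>
        psiw L \<nu> w ` K \<inter> psiw L \<nu> w' ` K =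
        psiw L \<nu> w ` ess_fixpts L N \<nu> \<inter> psiw L \<nu> w' ` ess_fixpts L N \<nu>"
    using sn by (elim conjE) assumption
  have conn: "\<forall>i\<in>{1..N}. \<forall>j\<in>{1..N}. (i, j) \<in>
        {(a, b). a \<in> {1..N} \<and> b \<in> {1..N} \<and> psi L \<nu> a ` K \<inter> psi L \<nu> b ` K \<noteq> {}}\<^sup>*"
    using sn by (elim conjE) assumption
  have Lnz: "(of_real L :: complex) \<noteq> 0" using L by simp
  obtain c \<rho> where rho: "\<rho> \<noteq> 0" and Vs: "V = {c + \<rho>, c + \<rho> * \<i>, c - \<rho>, c - \<rho> * \<i>}"
    using poly4[of V] assms(2,3) unfolding V_def by auto
  have VW: "V = (\<lambda>w. c + \<rho> * w) ` W" unfolding Vs W_def by auto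
  have Kinv: "\<forall>i\<in>{1..N}. psi L \<nu> i ` K \<subseteq> K" using Keq by blast
  have VK: "V \<subseteq> K"
  proof
    fix x assume "x \<in> V"
    then obtain m where "m \<in> {1..N}" "psi L \<nu> m x = x"
      unfolding V_def ess_fixpts_def fixpts_def by blast
    thus "x \<in> K" using fix_in_K[of K L \<nu> m x] Kc Kne Kinv L compact_imp_closed by blast
  qed
  have nest1: "psi L \<nu> a ` K \<inter> psi L \<nu> b ` K = psi L \<nu> a ` V \<inter> psi L \<nu> b ` V"
    if "a \<in> {1..N}" "b \<in> {1..N}" "a \<noteq> b" for a b
    using nest[rule_format, of "[a]" "[b]"] that unfolding V_def by (simp add: image_comp)
  have pair: "ev2 ((p - q) / \<rho>)"
    if ab: "a \<in> {1..N}" "b \<in> {1..N}" and pq: "p \<in> V" "q \<in> V" and eq: "psi L \<nu> a p = psi L \<nu> b q" for a b p q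
  proof (cases "a = b")
    case True
    then have "p = q" using eq Lnz by (simp add: psi_def)
    thus ?thesis by (simp add: ev2_0)
  next
    case False
    obtain wp wq where w: "wp \<in> W" "wq \<in> W" "p = c + \<rho> * wp" "q = c + \<rho> * wq"
      using pq unfolding VW by blast
    have "\<exists>\<sigma>\<in>{1, -1, \<i>, -\<i>}. wp = \<sigma> * wq" using w(1,2) unfolding W_def by auto
    then obtain \<sigma> where s: "\<sigma> \<in> {1, -1, \<i>, -\<i>}" "wp = \<sigma> * wq" by blast
    show ?thesis
    proof (cases "\<sigma> \<in> {\<i>, -\<i>}")
      case True
      have "psi L \<nu> a (c + \<rho> * (\<sigma> * wq)) = psi L \<nu> b (c + \<rho> * wq)" using eq w s by simp
      from no_adj[OF L W_def VW[unfolded V_def] rho VK[unfolded V_def] Kinv nest1[OF ab False, unfolded V_def] w(2) True this]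
      show ?thesis by (rule FalseE)
    next
      case F2: False
      hence "\<sigma> = 1 \<or> \<sigma> = -1" using s by auto
      moreover have "(p - q) / \<rho> = (\<sigma> - 1) * wq" using w s rho by (simp add: field_simps)
      ultimately show ?thesis using w(2) unfolding W_def
        by (auto simp: ev2_def intro: exI[of _ 0] exI[of _ 1] exI[of _ "-1"])
    qed
  qed
  define Rel where "Rel = {(a, b). a \<in> {1..N} \<and> b \<in> {1..N} \<and> psi L \<nu> a ` K \<inter> psi L \<nu> b ` K \<noteq> {}}"
  have nuL: "ev2 (of_real L * \<nu> m / \<rho>)" if m: "m \<in> {1..N}" for m
  proof -
    have "1 \<in> {1..N}" using N by simp
    hence "(1, m) \<in> Rel\<^sup>*" unfolding Rel_def by (rule conn[rule_format, OF _ m])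
    thus ?thesis
    proof (induction rule: rtrancl_induct)
      case base show ?case unfolding nu1 by (simp add: ev2_0)
    next
      case (step y z)
      from step.hyps(2) have "y \<in> {1..N} \<and> z \<in> {1..N} \<and> psi L \<nu> y ` K \<inter> psi L \<nu> z ` K \<noteq> {}"
        unfolding Rel_def by (simp only: mem_Collect_eq case_prod_conv simp_thms)
      hence yz: "y \<in> {1..N}" "z \<in> {1..N}" "psi L \<nu> y ` K \<inter> psi L \<nu> z ` K \<noteq> {}" by blast+
      show ?case
      proof (cases "y = z")
        case True thus ?thesis using step.IH by simp
      next
        case False
        have "psi L \<nu> y ` V \<inter> psi L \<nu> z ` V \<noteq> {}" using nest1[OF yz(1,2) False] yz(3) by simp
        then obtain x where x: "x \<in> psi L \<nu> y ` V" "x \<in> psi L \<nu> z ` V" by blast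
        from x(1) obtain p where p: "p \<in> V" "x = psi L \<nu> y p" by (rule imageE)
        from x(2) obtain q where q: "q \<in> V" "x = psi L \<nu> z q" by (rule imageE)
        have pq: "p \<in> V" "q \<in> V" "psi L \<nu> y p = psi L \<nu> z q" using p q by simp_all
        have ev: "ev2 ((p - q) / \<rho>)" using pair[OF yz(1,2) pq] .
        have "\<nu> z = (q / of_real L + \<nu> z) - q / of_real L" by simp
        also have "\<dots> = (p / of_real L + \<nu> y) - q / of_real L" using pq(3) by (simp add: psi_def)
        finally have "of_real L * \<nu> z = of_real L * \<nu> y + (p - q)"
          using Lnz by (simp add: ring_distribs)
        hence "of_real L * \<nu> z / \<rho> = of_real L * \<nu> y / \<rho> + (p - q) / \<rho>"
          by (simp add: add_divide_distrib)
        thus ?thesis using step.IH ev by (simp add: ev2_add)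
      qed
    qed
  qed
  obtain n :: int where Ln: "L = of_int n"
  proof -
    have "c + \<rho> \<in> V" "c - \<rho> \<in> V" unfolding Vs by auto
    then obtain m1 m2 where m: "m1 \<in> {1..N}" "psi L \<nu> m1 (c + \<rho>) = c + \<rho>"
      "m2 \<in> {1..N}" "psi L \<nu> m2 (c - \<rho>) = c - \<rho>"
      unfolding V_def ess_fixpts_def fixpts_def by blast
    have n1: "\<nu> m1 = (c + \<rho>) - (c + \<rho>) / of_real L" using m(2) by (simp add: psi_def algebra_simps)
    have n2: "\<nu> m2 = (c - \<rho>) - (c - \<rho>) / of_real L" using m(4) by (simp add: psi_def algebra_simps)
    have "ev2 (of_real L * \<nu> m1 / \<rho> - of_real L * \<nu> m2 / \<rho>)"
      using nuL[OF m(1)] nuL[OF m(3)] by (rule ev2_diff)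
    moreover have "of_real L * \<nu> m1 / \<rho> - of_real L * \<nu> m2 / \<rho> = of_real (2 * (L - 1))"
      unfolding n1 n2 using Lnz rho by (simp add: field_simps)
    ultimately obtain a :: int where "2 * (L - 1) = 2 * of_int a" unfolding ev2_def by auto
    hence "L = of_int (a + 1)" by simp
    thus ?thesis by (rule that)
  qed
  have shift_ev: "ev2 (s / \<rho>)" if s: "s \<in> complex_shifts L N \<nu> 0" for s
  proof -
    obtain idx J where sJ: "s = (\<Sum>j\<in>{0+1..J}. of_real (L powi j) * \<nu> (idx j))"
      and idx: "\<forall>j\<in>{0+1..J}. idx j \<in> {1..N}"
      using s unfolding complex_shifts_def by blast
    have "s / \<rho> = (\<Sum>j\<in>{0+1..J}. of_real (L powi j) * \<nu> (idx j) / \<rho>)"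
      unfolding sJ by (simp add: sum_divide_distrib)
    also have "ev2 \<dots>"
    proof (rule ev2_sum)
      fix j assume j: "j \<in> {0+1..J}"
      hence j1: "j \<ge> 1" by simp
      obtain k where k: "nat j = Suc k" proof
        show "nat j = Suc (nat j - 1)" using j1 by simp
      qed
      have "L powi j = L ^ (nat j)" using j1 by (simp add: power_int_def)
      also have "\<dots> = L ^ k * L" unfolding k by (rule power_Suc2)
      finally have Lp: "L powi j = L ^ k * L" .
      have eq: "of_real (L powi j) * \<nu> (idx j) / \<rho> = of_int (n ^ k) * (of_real L * \<nu> (idx j) / \<rho>)"
        unfolding Lp unfolding Ln by simp
      have "ev2 (of_real L * \<nu> (idx j) / \<rho>)" using nuL idx j by blast
      thus "ev2 (of_real (L powi j) * \<nu> (idx j) / \<rho>)" unfolding eq by (rule ev2_intmult)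
    qed
    finally show ?thesis .
  qed
  have VMM0: "VMM L N \<nu> 0 = V" unfolding VMM_def V_def by simp
  have Wfin: "finite W" "card W = 4" unfolding W_def by (simp_all add: complex_eq_iff)
  have injW: "inj_on (\<lambda>w. c + \<rho> * w) W" using rho by (auto simp: inj_on_def)
  have cardV: "card V = 4" using assms(3) unfolding V_def .
  have sumW: "(\<Sum>w\<in>W. w) = 0" unfolding W_def by (simp add: complex_eq_iff)
  have "(\<Sum>v\<in>V. v) = (\<Sum>w\<in>W. c + \<rho> * w)" unfolding VW by (rule sum.reindex_cong[OF injW refl refl])
  also have "\<dots> = of_nat 4 * c" using Wfin sumW by (simp add: sum.distrib sum_distrib_left[symmetric])
  finally have bary0: "bary L N \<nu> 0 = c" unfolding bary_def VMM0 cardV by simp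
  define lab where "lab x = labc ((x - c) / \<rho>)" for x
  have labw: "lab (c + \<rho> * w) = labc w" for w unfolding lab_def using rho by simp
  have labrange: "lab x \<in> {0,1,2,3}" for x unfolding lab_def labc_def labz_def by auto
  have Vl: "V = {c + \<rho> * 1, c + \<rho> * \<i>, c + \<rho> * (-1), c + \<rho> * (-\<i>)}" unfolding Vs by simp
  have lv: "lab (c + \<rho>) = 0" "lab (c + \<rho> * \<i>) = 1" "lab (c - \<rho>) = 2" "lab (c - \<rho> * \<i>) = 3"
    using labw[of 1] labw[of "\<i>"] labw[of "-1"] labw[of "-\<i>"] labc_vals by simp_all
  have imgV: "lab ` V = {0,1,2,3::nat}" unfolding Vs by (simp add: lv)
  have bij: "bij_betw lab V {0,1,2,3::nat}"
  proof -
    have "finite V" unfolding Vs by simp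
    moreover have "card (lab ` V) = card V" unfolding imgV cardV by simp
    ultimately have "inj_on lab V" by (simp add: inj_on_iff_eq_card)
    thus ?thesis unfolding bij_betw_def imgV by simp
  qed
  have rot1: "(\<lambda>x. bary L N \<nu> 0 + 1 * (x - bary L N \<nu> 0)) \<in> rotations L N \<nu> 0"
    unfolding rotations_def VMM0 by (rule CollectI, rule exI[of _ 1]) simp
  have negW: "uminus ` W = W" unfolding W_def by auto
  have rot2: "(\<lambda>x. bary L N \<nu> 0 + (-1) * (x - bary L N \<nu> 0)) \<in> rotations L N \<nu> 0"
  proof -
    have "(\<lambda>x. c + (-1) * (x - c)) ` V = (\<lambda>w. c + \<rho> * w) ` (uminus ` W)"
      unfolding VW image_image by simp
    also have "\<dots> = V" unfolding negW VW ..
    finally show ?thesis unfolding rotations_def VMM0 bary0 by (intro CollectI exI[of _ "-1"]) simp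
  qed
  have good: "good_labelling L N \<nu> {0,1,2,3::nat} 0 lab"
    unfolding good_labelling_def
  proof (intro conjI ballI)
    show "lab ` VMinf L N \<nu> 0 \<subseteq> {0,1,2,3}" using labrange by (simp add: image_subset_iff)
    show "bij_betw lab (VMM L N \<nu> 0) {0,1,2,3}" unfolding VMM0 by (rule bij)
  next
    fix s assume s: "s \<in> complex_shifts L N \<nu> 0"
    have g: "ev2 (s / \<rho>)" by (rule shift_ev[OF s])
    have labv: "lab (u + s) = labc (w + s / \<rho>)" if "u = c + \<rho> * w" for u w
      unfolding lab_def that using rho by (simp add: field_simps)
    from labc_shift[OF g] show "\<exists>R\<in>rotations L N \<nu> 0. \<forall>v\<in>(\<lambda>u. u + s) ` VMM L N \<nu> 0. lab v = lab (R (v - s))"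
    proof
      assume A: "\<forall>w\<in>{1, \<i>, - 1, - \<i>}. labc (w + s / \<rho>) = labc w"
      show ?thesis
      proof (rule bexI[OF _ rot1], rule ballI)
        fix v assume "v \<in> (\<lambda>u. u + s) ` VMM L N \<nu> 0"
        then obtain w where w: "w \<in> W" "v = (c + \<rho> * w) + s" unfolding VMM0 VW by blast
        have "labc (w + s / \<rho>) = labc w" using A w(1) unfolding W_def by blast
        hence "lab v = labc w" using labv[OF refl, of w] w(2) by simp
        also have "\<dots> = lab (c + \<rho> * w)" by (simp add: labw)
        finally show "lab v = lab (bary L N \<nu> 0 + 1 * (v - s - bary L N \<nu> 0))" using w by simp
      qed
    next
      assume A: "\<forall>w\<in>{1, \<i>, - 1, - \<i>}. labc (w + s / \<rho>) = labc (- w)"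
      show ?thesis
      proof (rule bexI[OF _ rot2], rule ballI)
        fix v assume "v \<in> (\<lambda>u. u + s) ` VMM L N \<nu> 0"
        then obtain w where w: "w \<in> W" "v = (c + \<rho> * w) + s" unfolding VMM0 VW by blast
        have "labc (w + s / \<rho>) = labc (- w)" using A w(1) unfolding W_def by blast
        hence "lab v = labc (- w)" using labv[OF refl, of w] w(2) by simp
        also have "\<dots> = lab (c + \<rho> * (- w))" by (rule labw[symmetric])
        also have "c + \<rho> * (- w) = bary L N \<nu> 0 + (-1) * (v - s - bary L N \<nu> 0)"
          using w by (simp add: bary0 algebra_simps)
        finally show "lab v = lab (bary L N \<nu> 0 + (-1) * (v - s - bary L N \<nu> 0))" .
      qed
    qed
  qed
  show ?thesis unfolding good_labelling_property_def
    using good cardV unfolding V_def by (intro exI[of _ "{0,1,2,3::nat}"] exI[of _ 0] exI[of _ lab]) simp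
qed

end
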